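(* Let $D$ be a tournament missing disjoint paths of length 2 and let $C=a_1b_1c_1,\dots,a_kb_kc_k$ be a double cycle in $\Delta(D)$. Then for all $i\in\{1,\dots,k\}$, with $H=D[K(C)]$: (1) $N^{++}_H(a_i)=N^{++}_H(c_i)$; (2) $N^{--}_H(a_i)=N^{--}_H(c_i)$.
   Context: All digraphs are finite oriented graphs; $D[X]$ is the induced subdigraph. $N^+_H(v)$, $N^-_H(v)$ are out/in-neighborhoods in $H$; $N^{++}_H(v)$ is the set of vertices $w\notin N_H^+(v)\cup\{v\}$ with $u\to w$ in $H$ for some $u\in N_H^+(v)$, and $N^{--}_H(v)$ is the set of vertices $w\notin N_H^-(v)\cup\{v\}$ with $w\to u$ in $H$ for some $u\in N_H^-(v)$. A missing edge is a pair of distinct non-adjacent vertices; the missing graph is formed by the missing edges. $D$ is a tournament missing disjoint paths of length 2 if its missing graph is a vertex-disjoint union of paths each with exactly two edges. For missing edges $\{x,y\},\{a,b\}$, $\{x,y\}$ loses to $\{a,b\}$ (written $xy\to ab$) if the endpoints can be labelled so that $x\to a$, $b\notin N^+(x)\cup N^{++}(x)$, $y\to b$, $a\notin N^+(y)\cup N^{++}(y)$ (neighborhoods in $D$). $\Delta(D)$ has the missing edges as vertices and arcs $(e,e')$ whenever $e$ loses to $e'$. For missing paths $abc$, $xyz$, $abc\to xyz$ means each of $ab,bc$ loses to each of $xy,yz$. A double cycle is a sequence $C=a_1b_1c_1,\dots,a_kb_kc_k$ ($k\ge2$) of distinct missing paths of length 2 (components of the missing graph, edges $a_ib_i,b_ic_i$)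 with $a_ib_ic_i\to a_{i+1}b_{i+1}c_{i+1}$ for all $i$, indices modulo $k$. $K(C)=\{a_i,b_i,c_i:1\le i\le k\}$. *)

theory Defs
  imports Main
begin

text \<open>A digraph is given by a vertex set V and an arc predicate A (A x y means x -> y).\<close>

definition oriented_graph :: "'a set \<Rightarrow> ('a \<Rightarrow> 'a \<Rightarrow> bool) \<Rightarrow> bool" where
  "oriented_graph V A \<longleftrightarrow> finite V \<and>
     (\<forall>x y. A x y \<longrightarrow> x \<in> V \<and> y \<in> V \<and> x \<noteq> y) \<and>
     (\<forall>x y. A x y \<longrightarrow> \<not> A y x)"

text \<open>Neighbourhoods inside the induced subdigraph on S (S = V gives neighbourhoods in D).\<close>
definition outN :: "('a \<Rightarrow> 'a \<Rightarrow> bool) \<Rightarrow> 'a set \<Rightarrow> 'a \<Rightarrow> 'a set" where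
  "outN A S v = {w \<in> S. A v w}"

definition inN :: "('a \<Rightarrow> 'a \<Rightarrow> bool) \<Rightarrow> 'a set \<Rightarrow> 'a \<Rightarrow> 'a set" where
  "inN A S v = {w \<in> S. A w v}"

definition out2N :: "('a \<Rightarrow> 'a \<Rightarrow> bool) \<Rightarrow> 'a set \<Rightarrow> 'a \<Rightarrow> 'a set" where
  "out2N A S v = {w \<in> S. w \<notin> outN A S v \<union> {v} \<and> (\<exists>u \<in> outN A S v. A u w)}"

definition in2N :: "('a \<Rightarrow> 'a \<Rightarrow> bool) \<Rightarrow> 'a set \<Rightarrow> 'a \<Rightarrow> 'a set" where
  "in2N A S v = {w \<in> S. w \<notin> inN A S v \<union> {v} \<and> (\<exists>u \<in> inN A S v. A w u)}"

definition missing :: "'a set \<Rightarrow> ('a \<Rightarrow> 'a \<Rightarrow> bool) \<Rightarrow> 'a \<Rightarrow> 'a \<Rightarrow> bool" where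
  "missing V A x y \<longleftrightarrow> x \<in> V \<and> y \<in> V \<and> x \<noteq> y \<and> \<not> A x y \<and> \<not> A y x"

text \<open>a b c is a component of the missing graph which is a path with edges ab, bc.\<close>
definition missing_path :: "'a set \<Rightarrow> ('a \<Rightarrow> 'a \<Rightarrow> bool) \<Rightarrow> 'a \<Rightarrow> 'a \<Rightarrow> 'a \<Rightarrow> bool" where
  "missing_path V A a b c \<longleftrightarrow>
     missing V A a b \<and> missing V A b c \<and> a \<noteq> c \<and> \<not> missing V A a c \<and>
     {y. missing V A a y} = {b} \<and> {y. missing V A b y} = {a, c} \<and> {y. missing V A c y} = {b}"

definition tournament_missing_P3s :: "'a set \<Rightarrow> ('a \<Rightarrow> 'a \<Rightarrow> bool) \<Rightarrow> bool" where
  "tournament_missing_P3s V A \<longleftrightarrow> oriented_graph V A \<and>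
     (\<forall>x y. missing V A x y \<longrightarrow>
        (\<exists>a b c. missing_path V A a b c \<and> ({x, y} = {a, b} \<or> {x, y} = {b, c})))"

text \<open>Ordered version: with labelling x,y,a,b the missing edge {x,y} loses to {a,b}.\<close>
definition loses_lab :: "'a set \<Rightarrow> ('a \<Rightarrow> 'a \<Rightarrow> bool) \<Rightarrow> 'a \<Rightarrow> 'a \<Rightarrow> 'a \<Rightarrow> 'a \<Rightarrow> bool" where
  "loses_lab V A x y a b \<longleftrightarrow>
     A x a \<and> b \<notin> outN A V x \<union> out2N A V x \<and>
     A y b \<and> a \<notin> outN A V y \<union> out2N A V y"

text \<open>Arc (e, e') of Delta(D): e, e' missing edges and e loses to e'.\<close>
definition loses :: "'a set \<Rightarrow> ('a \<Rightarrow> 'a \<Rightarrow> bool) \<Rightarrow> 'a set \<Rightarrow> 'a set \<Rightarrow> bool" where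
  "loses V A e e' \<longleftrightarrow>
     (\<exists>x y a b. e = {x, y} \<and> e' = {a, b} \<and> missing V A x y \<and> missing V A a b \<and>
                loses_lab V A x y a b)"

definition path_loses :: "'a set \<Rightarrow> ('a \<Rightarrow> 'a \<Rightarrow> bool) \<Rightarrow> 'a \<Rightarrow> 'a \<Rightarrow> 'a \<Rightarrow> 'a \<Rightarrow> 'a \<Rightarrow> 'a \<Rightarrow> bool" where
  "path_loses V A a b c x y z \<longleftrightarrow>
     (\<forall>e \<in> {{a, b}, {b, c}}. \<forall>e' \<in> {{x, y}, {y, z}}. loses V A e e')"

text \<open>Double cycle, 0-indexed: paths a i b i c i for i < k, indices mod k.\<close>
definition double_cycle :: "'a set \<Rightarrow> ('a \<Rightarrow> 'a \<Rightarrow> bool) \<Rightarrow> nat \<Rightarrow>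
    (nat \<Rightarrow> 'a) \<Rightarrow> (nat \<Rightarrow> 'a) \<Rightarrow> (nat \<Rightarrow> 'a) \<Rightarrow> bool" where
  "double_cycle V A k a b c \<longleftrightarrow> k \<ge> 2 \<and>
     (\<forall>i < k. missing_path V A (a i) (b i) (c i)) \<and>
     (\<forall>i < k. \<forall>j < k. i \<noteq> j \<longrightarrow> {a i, b i, c i} \<noteq> {a j, b j, c j}) \<and>
     (\<forall>i < k. path_loses V A (a i) (b i) (c i)
                (a (Suc i mod k)) (b (Suc i mod k)) (c (Suc i mod k)))"

definition K_of :: "nat \<Rightarrow> (nat \<Rightarrow> 'a) \<Rightarrow> (nat \<Rightarrow> 'a) \<Rightarrow> (nat \<Rightarrow> 'a) \<Rightarrow> 'a set" where
  "K_of k a b c = (\<Union>i < k. {a i, b i, c i})"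

end

theory Submission
  imports Defs
begin

definition NR where "NR V A u v \<longleftrightarrow> v \<notin> outN A V u \<union> out2N A V u"

lemma NR_one: "oriented_graph V A \<Longrightarrow> NR V A u v \<Longrightarrow> A u v \<Longrightarrow> False"
  unfolding NR_def outN_def oriented_graph_def by auto

lemma NR_two: "oriented_graph V A \<Longrightarrow> NR V A u v \<Longrightarrow> A u x \<Longrightarrow> A x v \<Longrightarrow> False"
  unfolding NR_def outN_def out2N_def oriented_graph_def by blast

lemma L1:
  assumes og: "oriented_graph V A" and l: "loses V A {p,q} {r,s}" and qs: "A q s"
  shows "NR V A p s \<and> NR V A q r"
  using l qs og unfolding loses_def loses_lab_def NR_def oriented_graph_def missing_def
  by (auto simp: doubleton_eq_iff outN_def)

lemma L2:
  assumes og: "oriented_graph V A" and l: "loses V A {p,q} {r,s}" and qs: "A s q"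
  shows "NR V A p r \<and> NR V A q s"
  using l qs og unfolding loses_def loses_lab_def NR_def oriented_graph_def missing_def
  by (auto simp: doubleton_eq_iff outN_def)

lemma comp:
  assumes "missing_path V A x y z" "missing_path V A x' y' z'"
    "t \<in> {x,y,z}" "t \<in> {x',y',z'}"
  shows "{x,y,z} = {x',y',z'}"
  using assms unfolding missing_path_def
  by (smt (verit) doubleton_eq_iff insert_commute singleton_insert_inj_eq' insert_iff empty_iff)

fun Fx :: "(nat \<Rightarrow> bool) \<Rightarrow> nat \<Rightarrow> nat \<Rightarrow> bool" where
  "Fx g m 0 = False"
| "Fx g m (Suc n) = (g m \<noteq> Fx g (Suc m) n)"

lemma Fadd: "Fx g m (n1+n2) = (Fx g m n1 \<noteq> Fx g (m+n1) n2)"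
  by (induction n1 arbitrary: m) auto

locale DC =
  fixes V :: "'a set" and A :: "'a \<Rightarrow> 'a \<Rightarrow> bool" and k :: nat and a b c :: "nat \<Rightarrow> 'a"
  assumes T: "tournament_missing_P3s V A" and DCy: "double_cycle V A k a b c"
begin

definition P where "P m = {a m, b m, c m}"
definition g where "g m = A (b (m mod k)) (b (Suc m mod k))"

lemma og: "oriented_graph V A" using T unfolding tournament_missing_P3s_def by auto
lemma k2: "k \<ge> 2" using DCy unfolding double_cycle_def by auto
lemma mp: "m < k \<Longrightarrow> missing_path V A (a m) (b m) (c m)"
  using DCy unfolding double_cycle_def by auto
lemma PV: "m < k \<Longrightarrow> P m \<subseteq> V"
  using mp[of m] unfolding P_def missing_path_def missing_def by auto
lemma dist: "m < k \<Longrightarrow> a m \<noteq> b m \<and> b m \<noteq> c m \<and> a m \<noteq> c m"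
  using mp[of m] unfolding missing_path_def missing_def by auto
lemma disj: "m < k \<Longrightarrow> m' < k \<Longrightarrow> m \<noteq> m' \<Longrightarrow> P m \<inter> P m' = {}"
proof (rule ccontr)
  assume h: "m < k" "m' < k" "m \<noteq> m'" "P m \<inter> P m' \<noteq> {}"
  then obtain t where "t \<in> P m" "t \<in> P m'" by auto
  then have "P m = P m'" using comp[OF mp[OF h(1)] mp[OF h(2)]] unfolding P_def by auto
  then show False using DCy h unfolding double_cycle_def P_def by auto
qed

lemma miss_in: "m < k \<Longrightarrow> u \<in> P m \<Longrightarrow> missing V A u v \<Longrightarrow> v \<in> P m"
  using mp[of m] unfolding missing_path_def P_def by auto

lemma adj: "m < k \<Longrightarrow> m' < k \<Longrightarrow> m \<noteq> m' \<Longrightarrow> u \<in> P m \<Longrightarrow> v \<in> P m' \<Longrightarrow> A u v \<or> A v u"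
proof (rule ccontr)
  assume h: "m < k" "m' < k" "m \<noteq> m'" "u \<in> P m" "v \<in> P m'" "\<not> (A u v \<or> A v u)"
  have "u \<noteq> v" using disj[OF h(1-3)] h by auto
  moreover have "u \<in> V" "v \<in> V" using PV h by auto
  ultimately have "missing V A u v" using h unfolding missing_def by auto
  then have "v \<in> P m" using miss_in h by auto
  then show False using disj[OF h(1-3)] h by auto
qed

lemma forb:
  assumes m: "m < k" and u: "u \<in> P m" and v: "v \<in> P (Suc m mod k)"
    and cond: "(v = b (Suc m mod k)) = ((u = b m) \<noteq> g m)"
  shows "NR V A u v"
proof -
  define m' where "m' = Suc m mod k"
  have m': "m' < k" "m' \<noteq> m" using k2 m unfolding m'_def
    by (auto simp: mod_Suc)
  have pl: "path_loses V A (a m) (b m) (c m) (a m') (b m') (c m')"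
    using DCy m unfolding double_cycle_def m'_def by auto
  have l1: "loses V A {a m, b m} {a m', b m'}" and l2: "loses V A {a m, b m} {c m', b m'}"
    and l3: "loses V A {c m, b m} {a m', b m'}" and l4: "loses V A {c m, b m} {c m', b m'}"
    using pl unfolding path_loses_def by (auto simp: insert_commute)
  have dm: "a m \<noteq> b m \<and> b m \<noteq> c m \<and> a m \<noteq> c m" using dist m by auto
  have dm': "a m' \<noteq> b m' \<and> b m' \<noteq> c m' \<and> a m' \<noteq> c m'" using dist m' by auto
  have gm: "g m = A (b m) (b m')" unfolding g_def m'_def using m by auto
  show ?thesis
  proof (cases "A (b m) (b m')")
    case True
    note r = L1[OF og l1 True] L1[OF og l2 True] L1[OF og l3 True] L1[OF og l4 True]
    show ?thesis using r u v cond gm True dm dm' unfolding P_def m'_def[symmetric] by auto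
  next
    case False
    then have Tr: "A (b m') (b m)" using adj[OF m m'(1) m'(2)[symmetric], of "b m" "b m'"]
      unfolding P_def by auto
    note r = L2[OF og l1 Tr] L2[OF og l2 Tr] L2[OF og l3 Tr] L2[OF og l4 Tr]
    show ?thesis using r u v cond gm False dm dm' unfolding P_def m'_def[symmetric] by auto
  qed
qed

lemma Fmod: "Fx g m n = Fx g (m mod k) n"
proof (induction n arbitrary: m)
  case 0 then show ?case by simp
next
  case (Suc n)
  have "g m = g (m mod k)" unfolding g_def by (simp add: mod_Suc_eq)
  moreover have "Fx g (Suc m) n = Fx g (Suc (m mod k)) n"
    using Suc.IH[of "Suc m"] Suc.IH[of "Suc (m mod k)"] by (simp add: mod_Suc_eq)
  ultimately show ?case by simp
qed

lemma chain:
  "0 < n \<Longrightarrow> n < k \<Longrightarrow> m < k \<Longrightarrow> u \<in> P m \<Longrightarrow> w \<in> P ((m+n) mod k) \<Longrightarrow> A u w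
   \<Longrightarrow> (w = b ((m+n) mod k)) \<noteq> ((u = b m) \<noteq> Fx g m n)"
proof (induction n arbitrary: m u)
  case 0 then show ?case by simp
next
  case (Suc n)
  define m' where "m' = Suc m mod k"
  have m'k: "m' < k" using Suc.prems unfolding m'_def by auto
  show ?case
  proof (cases "n = 0")
    case True
    show ?thesis
    proof
      assume e: "(w = b ((m + Suc n) mod k)) = ((u = b m) \<noteq> Fx g m (Suc n))"
      have "NR V A u w" using forb[OF Suc.prems(3,4), of w] Suc.prems(5) e True by simp
      then show False using NR_one[OF og] Suc.prems(6) by auto
    qed
  next
    case False
    define v where "v = (if (u = b m) \<noteq> g m then b m' else a m')"
    have vP: "v \<in> P m'" unfolding v_def P_def by auto
    have vc: "(v = b m') = ((u = b m) \<noteq> g m)" unfolding v_def using dist[OF m'k] by auto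
    have NRv: "NR V A u v" using forb[OF Suc.prems(3,4), of v] vP vc unfolding m'_def by simp
    define j where "j = (m + Suc n) mod k"
    have jk: "j < k" unfolding j_def using Suc.prems by auto
    have jm': "j = (m' + n) mod k" unfolding j_def m'_def by (simp add: mod_add_left_eq)
    have jne: "j \<noteq> m'"
    proof
      assume "j = m'"
      then have e: "(m' + n) mod k = m'" using jm' by simp
      show False
      proof (cases "m' + n < k")
        case True then show False using e False by simp
      next
        case F2: False
        then have "(m' + n) mod k = (m' + n - k) mod k" by (simp add: le_mod_geq)
        also have "\<dots> = m' + n - k" using m'k Suc.prems by simp
        finally show False using e F2 Suc.prems by simp
      qed
    qed
    have "A v w \<or> A w v" using adj[OF m'k jk jne[symmetric] vP] Suc.prems(5) unfolding j_def by auto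
    then have Avw: "A v w" using NR_two[OF og NRv Suc.prems(6)] by auto
    have IH: "(w = b j) \<noteq> ((v = b m') \<noteq> Fx g m' n)"
    proof -
      have wj': "w \<in> P ((m' + n) mod k)" using Suc.prems(5) jm' unfolding j_def by simp
      have "0 < n" "n < k" using False Suc.prems by auto
      from Suc.IH[OF this m'k vP wj' Avw] show ?thesis using jm' by simp
    qed
    have "Fx g (Suc m) n = Fx g m' n" unfolding m'_def using Fmod by simp
    then show ?thesis using IH vc unfolding j_def by auto
  qed
qed

lemma parity: "i < k \<Longrightarrow> Fx g i k"
proof -
  assume ik: "i < k"
  define i' where "i' = Suc i mod k"
  have i'k: "i' < k" "i' \<noteq> i" using ik k2 unfolding i'_def by (auto simp: mod_Suc)
  define w where "w = (if g i then b i else a i)"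
  have wP: "w \<in> P i" unfolding w_def P_def by auto
  have wc: "(w = b i) = g i" unfolding w_def using dist[OF ik] by auto
  have NRw: "NR V A w (a i')" using forb[OF ik wP, of "a i'"] wc dist[OF i'k(1)]
    unfolding i'_def P_def by auto
  have "A w (a i') \<or> A (a i') w" using adj[OF ik i'k(1) i'k(2)[symmetric] wP] unfolding P_def by auto
  then have Aw: "A (a i') w" using NR_one[OF og NRw] by auto
  have idx: "(i' + (k - 1)) mod k = i"
  proof -
    have "(i' + (k - 1)) mod k = (Suc i + (k - 1)) mod k" unfolding i'_def by (simp add: mod_add_left_eq)
    also have "Suc i + (k - 1) = i + k" using k2 by simp
    finally show ?thesis using ik by simp
  qed
  have "(w = b i) \<noteq> ((a i' = b i') \<noteq> Fx g i' (k - 1))"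
    using chain[of "k - 1" i' "a i'" w] k2 i'k Aw wP idx unfolding P_def by auto
  then have h: "g i \<noteq> Fx g i' (k-1)" using wc dist[OF i'k(1)] by auto
  have "Fx g (Suc i) (k-1) = Fx g i' (k-1)" unfolding i'_def using Fmod by simp
  moreover have "k = Suc (k - 1)" using k2 by auto
  ultimately show ?thesis using h by (metis Fx.simps(2))
qed

lemma notwist:
  assumes ik: "i < k" and e: "e \<in> {a i, c i}" and e': "e' \<in> {a i, c i}"
    and jk: "j < k" and ji: "j \<noteq> i" and w: "w \<in> P j" and A1: "A e w" and A2: "A w e'"
  shows False
proof -
  define n1 where "n1 = (if i < j then j - i else j + k - i)"
  define n2 where "n2 = k - n1"
  have n1: "0 < n1" "n1 < k" "(i + n1) mod k = j" unfolding n1_def using ik jk ji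
    by auto
  have n2: "0 < n2" "n2 < k" "(j + n2) mod k = i" "n1 + n2 = k" unfolding n2_def n1_def using ik jk ji
    by auto
  have eb: "e \<noteq> b i" "e' \<noteq> b i" using e e' dist[OF ik] by auto
  have c1: "(w = b j) \<noteq> ((e = b i) \<noteq> Fx g i n1)"
    using chain[OF n1(1,2) ik, of e w] e w n1(3) A1 unfolding P_def by auto
  have c2: "(e' = b i) \<noteq> ((w = b j) \<noteq> Fx g j n2)"
    using chain[OF n2(1,2) jk w, of e'] e' n2(3) A2 unfolding P_def by auto
  have "Fx g i n1 = Fx g j n2" using c1 c2 eb by auto
  moreover have "Fx g i k = (Fx g i n1 \<noteq> Fx g (i+n1) n2)" using Fadd n2(4) by metis
  moreover have "Fx g (i+n1) n2 = Fx g j n2" using Fmod n1(3) by metis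
  ultimately show False using parity[OF ik] by auto
qed

lemma twin:
  assumes ik: "i < k" and wK: "w \<in> K_of k a b c" and wa: "w \<noteq> a i" and wc: "w \<noteq> c i"
  shows "(A (a i) w \<longleftrightarrow> A (c i) w) \<and> (A w (a i) \<longleftrightarrow> A w (c i))"
proof -
  obtain j where jk: "j < k" and wj: "w \<in> P j" using wK unfolding K_of_def P_def by auto
  show ?thesis
  proof (cases "j = i")
    case True
    then have "w = b i" using wj wa wc unfolding P_def by auto
    then show ?thesis using mp[OF ik] unfolding missing_path_def missing_def by auto
  next
    case False
    have ad1: "A (a i) w \<or> A w (a i)" using adj[OF ik jk False[symmetric] _ wj] unfolding P_def by auto
    have ad2: "A (c i) w \<or> A w (c i)" using adj[OF ik jk False[symmetric] _ wj] unfolding P_def by auto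
    have n1: "\<not> (A (a i) w \<and> A w (c i))" using notwist[OF ik _ _ jk False wj, of "a i" "c i"] by auto
    have n2: "\<not> (A (c i) w \<and> A w (a i))" using notwist[OF ik _ _ jk False wj, of "c i" "a i"] by auto
    have o: "\<not> (A x y \<and> A y x)" for x y using og unfolding oriented_graph_def by auto
    show ?thesis using ad1 ad2 n1 n2 o by blast
  qed
qed

end

theorem lemma4p9:
  fixes V :: "'a set" and A :: "'a \<Rightarrow> 'a \<Rightarrow> bool"
    and k :: nat and a b c :: "nat \<Rightarrow> 'a"
  assumes "tournament_missing_P3s V A"
    and "double_cycle V A k a b c"
    and "i < k"
  shows "out2N A (K_of k a b c) (a i) = out2N A (K_of k a b c) (c i)
       \<and> in2N A (K_of k a b c) (a i) = in2N A (K_of k a b c) (c i)"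
proof -
  interpret DC V A k a b c using assms(1,2) by unfold_locales
  define K where "K = K_of k a b c"
  have tw: "\<And>w. w \<in> K \<Longrightarrow> w \<noteq> a i \<Longrightarrow> w \<noteq> c i \<Longrightarrow>
      (A (a i) w \<longleftrightarrow> A (c i) w) \<and> (A w (a i) \<longleftrightarrow> A w (c i))"
    using twin[OF assms(3)] unfolding K_def by blast
  have o: "\<And>x y. A x y \<Longrightarrow> \<not> A y x" and irr: "\<And>x. \<not> A x x"
    using og unfolding oriented_graph_def by auto
  have ac: "A (a i) (c i) \<or> A (c i) (a i)"
    using mp[OF assms(3)] PV[OF assms(3)] unfolding missing_path_def missing_def P_def by auto
  have "out2N A K (a i) = out2N A K (c i)"
    unfolding out2N_def outN_def using tw o irr ac by (auto; metis)
  moreover have "in2N A K (a i) = in2N A K (c i)"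
    unfolding in2N_def inN_def using tw o irr ac by (auto; metis)
  ultimately show ?thesis unfolding K_def by simp
qed

end
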